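(* Let $f:\mathbb{R}^n\times\mathbb{R}^m\to\mathbb{R}$ and $g:\mathbb{R}^n\times\mathbb{R}^m\to\mathbb{R}^p$ belong to $\mathcal{C}^{0,2}(\mathbb{R}^n\times\mathbb{R}^m)$. Assume that for every $x\in\mathbb{R}^n$, $f(x,\cdot)$ is strictly convex, $g(x,\cdot)$ is convex (componentwise), and the problem $\min_{u\in\mathbb{R}^m} f(x,u)$ subject to $g(x,u)\le 0$ has at least one minimizer; let $u^*(x)$ denote the (unique) minimizer. Assume Slater's condition holds at $x_0\in\mathbb{R}^n$, i.e., there exists $\hat u$ with $g_i(x_0,\hat u)<0$ for all $i\in\{1,\dots,p\}$. Let $F:\mathbb{R}^n\times\mathbb{R}^m\to\mathbb{R}^n$ be locally Lipschitz. Then there exists $\delta_0>0$ such that the differential equation $\dot x=F(x,u^*(x))$ has at least one (classical) solution $x:(-\delta_0,\delta_0)\to\mathbb{R}^n$ with $x(0)=x_0$.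
   Context: A function $\varphi:\mathbb{R}^n\times\mathbb{R}^m\to\mathbb{R}^d$, $(x,u)\mapsto\varphi(x,u)$, belongs to $\mathcal{C}^{0,2}(\mathbb{R}^n\times\mathbb{R}^m)$ if $\varphi$ is continuous and the partial derivatives of $\varphi$ with respect to $u$ of order up to $2$ exist and are continuous jointly in $(x,u)$. *)

theory Defs
  imports "HOL-Analysis.Analysis"
begin

definition C0_2 :: "(real^'n \<Rightarrow> real^'m \<Rightarrow> 'd::real_normed_vector) \<Rightarrow> bool" where
  "C0_2 \<phi> \<longleftrightarrow>
     continuous_on UNIV (\<lambda>z. \<phi> (fst z) (snd z)) \<and>
     (\<exists>D1 D2.
        (\<forall>x u j. ((\<lambda>t. \<phi> x (u + t *\<^sub>R axis j 1)) has_vector_derivative D1 j x u) (at 0)) \<and>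
        (\<forall>x u j k. ((\<lambda>t. D1 j x (u + t *\<^sub>R axis k 1)) has_vector_derivative D2 j k x u) (at 0)) \<and>
        (\<forall>j. continuous_on UNIV (\<lambda>z. D1 j (fst z) (snd z))) \<and>
        (\<forall>j k. continuous_on UNIV (\<lambda>z. D2 j k (fst z) (snd z))))"

definition strictly_convex_on :: "'a::real_vector set \<Rightarrow> ('a \<Rightarrow> real) \<Rightarrow> bool" where
  "strictly_convex_on S h \<longleftrightarrow> convex S \<and>
     (\<forall>x\<in>S. \<forall>y\<in>S. \<forall>t::real. x \<noteq> y \<and> 0 < t \<and> t < 1 \<longrightarrow>
        h ((1 - t) *\<^sub>R x + t *\<^sub>R y) < (1 - t) * h x + t * h y)"

definition is_minimizer ::
  "(real^'n \<Rightarrow> real^'m \<Rightarrow> real) \<Rightarrow> (real^'n \<Rightarrow> real^'m \<Rightarrow> real^'p) \<Rightarrow> real^'n \<Rightarrow> real^'m \<Rightarrow> bool" where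
  "is_minimizer f g x u \<longleftrightarrow> (\<forall>i. g x u $ i \<le> 0) \<and>
     (\<forall>v. (\<forall>i. g x v $ i \<le> 0) \<longrightarrow> f x u \<le> f x v)"

definition locally_lipschitz :: "('a::metric_space \<Rightarrow> 'b::metric_space) \<Rightarrow> bool" where
  "locally_lipschitz h \<longleftrightarrow> (\<forall>z. \<exists>r>0. \<exists>L. \<forall>z1\<in>ball z r. \<forall>z2\<in>ball z r.
      dist (h z1) (h z2) \<le> L * dist z1 z2)"

end

theory Submission
  imports Defs
begin

lemma ustar_cont:
  fixes f :: "real^'n \<Rightarrow> real^'m \<Rightarrow> real"
    and g :: "real^'n \<Rightarrow> real^'m \<Rightarrow> real^'p"
    and ustar :: "real^'n \<Rightarrow> real^'m"
  assumes cf: "continuous_on UNIV (\<lambda>z. f (fst z) (snd z))"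
    and cg: "continuous_on UNIV (\<lambda>z. g (fst z) (snd z))"
    and sc: "\<forall>x. strictly_convex_on UNIV (f x)"
    and cv: "\<forall>x i. convex_on UNIV (\<lambda>u. g x u $ i)"
    and mn: "\<forall>x. is_minimizer f g x (ustar x)"
    and sl: "\<forall>i. g x1 uh $ i < 0"
  shows "isCont ustar x1"
proof -
  define u1 where "u1 = ustar x1"
  have u1f: "\<And>i. g x1 u1 $ i \<le> 0" and u1m: "\<And>v. (\<forall>i. g x1 v $ i \<le> 0) \<Longrightarrow> f x1 u1 \<le> f x1 v"
    using mn unfolding u1_def is_minimizer_def by auto
  have cfx: "continuous_on UNIV (f x)" for x
    by (rule continuous_on_compose2[OF cf, of UNIV "\<lambda>v. (x, v)", simplified]) (auto intro!: continuous_intros)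
  have cfv: "continuous_on UNIV (\<lambda>x. f x v)" for v
    by (rule continuous_on_compose2[OF cf, of UNIV "\<lambda>x. (x, v)", simplified]) (auto intro!: continuous_intros)
  have cgv: "continuous_on UNIV (\<lambda>x. g x v)" for v
    by (rule continuous_on_compose2[OF cg, of UNIV "\<lambda>x. (x, v)", simplified]) (auto intro!: continuous_intros)
  define \<Phi> where "\<Phi> = (\<lambda>z. max (f (fst z) (snd z) - f x1 u1) (\<Sum>i\<in>UNIV. max 0 (g (fst z) (snd z) $ i)))"
  have c\<Phi>: "continuous_on UNIV \<Phi>" unfolding \<Phi>_def
    by (intro continuous_intros cf continuous_on_component cg)
  have strict: "f x ((1/2) *\<^sub>R a + (1/2) *\<^sub>R b) < (1/2) * f x a + (1/2) * f x b" if "a \<noteq> b" for x a b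
  proof -
    have "f x ((1 - 1/2) *\<^sub>R a + (1/2) *\<^sub>R b) < (1 - 1/2) * f x a + (1/2) * f x b"
      using sc that unfolding strictly_convex_on_def
      by (metis (no_types, lifting) UNIV_I divide_less_eq_1_pos zero_less_divide_1_iff zero_less_numeral one_less_numeral_iff semiring_norm(76))
    thus ?thesis by simp
  qed
  show ?thesis
    unfolding isCont_def tendsto_iff
  proof (intro allI impI)
    fix \<epsilon> :: real assume \<epsilon>: "\<epsilon> > 0"
    define S where "S = sphere u1 \<epsilon>"
    have pos: "\<Phi> (x1, v) > 0" if "v \<in> S" for v
    proof (rule ccontr)
      assume "\<not> \<Phi> (x1, v) > 0"
      hence a: "f x1 v \<le> f x1 u1" and b: "(\<Sum>i\<in>UNIV. max 0 (g x1 v $ i)) \<le> 0"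
        unfolding \<Phi>_def by auto
      have "\<forall>i\<in>UNIV. max 0 (g x1 v $ i) = 0"
      proof -
        have "(\<Sum>i\<in>UNIV. max 0 (g x1 v $ i)) = 0" using b by (intro antisym sum_nonneg) auto
        thus ?thesis by (subst (asm) sum_nonneg_eq_0_iff) auto
      qed
      hence fv: "\<forall>i. g x1 v $ i \<le> 0" by (metis UNIV_I max.cobounded2)
      have "v \<noteq> u1" using that \<epsilon> unfolding S_def by auto
      define m where "m = (1/2) *\<^sub>R u1 + (1/2) *\<^sub>R v"
      have "g x1 m $ i \<le> 0" for i
      proof -
        have "g x1 m $ i \<le> (1 - 1/2) * g x1 u1 $ i + (1/2) * g x1 v $ i"
          using convex_onD[OF cv[rule_format, of x1 i], of "1/2" u1 v] unfolding m_def by simp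
        also have "\<dots> \<le> 0" using u1f[of i] fv[rule_format, of i] by simp
        finally show ?thesis .
      qed
      hence "f x1 u1 \<le> f x1 m" using u1m by blast
      moreover have "f x1 m < (1/2) * f x1 u1 + (1/2) * f x1 v"
        using strict[OF \<open>v \<noteq> u1\<close>[symmetric]] unfolding m_def by simp
      ultimately show False using a u1m[OF fv] by linarith
    qed
    have cS: "compact S" unfolding S_def by simp
    have neS: "S \<noteq> {}" unfolding S_def using \<epsilon> by simp
    have "continuous_on S (\<lambda>v. \<Phi> (x1, v))"
      by (rule continuous_on_compose2[OF c\<Phi>]) (auto intro!: continuous_intros)
    then obtain v0 where "v0 \<in> S" and v0: "\<forall>v\<in>S. \<Phi> (x1, v0) \<le> \<Phi> (x1, v)"
      using continuous_attains_inf[OF cS neS] by blast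
    define \<mu> where "\<mu> = \<Phi> (x1, v0)"
    have \<mu>: "\<mu> > 0" "\<And>v. v \<in> S \<Longrightarrow> \<mu> \<le> \<Phi> (x1, v)"
      using pos[OF \<open>v0 \<in> S\<close>] v0 unfolding \<mu>_def by auto
    have "uniformly_continuous_on (cball x1 1 \<times> S) \<Phi>"
      by (rule compact_uniformly_continuous[OF continuous_on_subset[OF c\<Phi>]])
         (auto intro: compact_Times cS)
    then obtain r where r: "r > 0" and
      rr: "\<And>z z'. z \<in> cball x1 1 \<times> S \<Longrightarrow> z' \<in> cball x1 1 \<times> S \<Longrightarrow> dist z' z < r \<Longrightarrow> dist (\<Phi> z') (\<Phi> z) < \<mu>/2"
      unfolding uniformly_continuous_on_def using \<mu>(1) by (metis half_gt_zero)
    have \<Phi>big: "\<Phi> (x, v) > \<mu>/2" if "dist x x1 < min r 1" "v \<in> S" for x v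
    proof -
      have "dist (\<Phi> (x, v)) (\<Phi> (x1, v)) < \<mu>/2"
        using that by (intro rr) (auto simp: dist_Pair_Pair dist_commute)
      thus ?thesis using \<mu>(2)[OF that(2)] unfolding dist_real_def by linarith
    qed
    obtain \<rho> where \<rho>: "\<rho> > 0" "\<And>v. dist v u1 < \<rho> \<Longrightarrow> dist (f x1 v) (f x1 u1) < \<mu>/4"
      using cfx[of x1] \<mu>(1) unfolding continuous_on_iff by (metis UNIV_I zero_less_divide_iff zero_less_numeral)
    define lam where "lam = min 1 (min \<rho> \<epsilon> / (2 * (norm (uh - u1) + 1)))"
    have npos: "2 * (norm (uh - u1) + 1) > 0" by (smt (verit) norm_ge_zero)
    have cpos: "min \<rho> \<epsilon> > 0" using \<rho> \<epsilon> by simp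
    have lam: "0 < lam" "lam \<le> 1" unfolding lam_def using npos cpos by auto
    define w where "w = (1 - lam) *\<^sub>R u1 + lam *\<^sub>R uh"
    have "dist w u1 = lam * norm (uh - u1)"
      unfolding w_def dist_norm using lam by (simp add: algebra_simps flip: scaleR_diff_right)
    also have "\<dots> \<le> min \<rho> \<epsilon> / (2 * (norm (uh - u1) + 1)) * norm (uh - u1)"
      unfolding lam_def by (intro mult_right_mono) auto
    also have "\<dots> < min \<rho> \<epsilon>"
    proof -
      have "norm (uh - u1) / (2 * (norm (uh - u1) + 1)) < 1" using npos by (simp add: divide_less_eq)
      hence "min \<rho> \<epsilon> * (norm (uh - u1) / (2 * (norm (uh - u1) + 1))) < min \<rho> \<epsilon> * 1"
        using cpos by (intro mult_strict_left_mono) auto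
      thus ?thesis by (simp add: field_simps)
    qed
    finally have dw: "dist w u1 < min \<rho> \<epsilon>" .
    have gw: "g x1 w $ i < 0" for i
    proof -
      have "g x1 w $ i \<le> (1 - lam) * g x1 u1 $ i + lam * g x1 uh $ i"
        using convex_onD[OF cv[rule_format, of x1 i], of lam u1 uh] lam unfolding w_def by simp
      also have "\<dots> < 0" using u1f[of i] sl lam
        by (smt (verit) mult_nonneg_nonpos mult_pos_neg)
      finally show ?thesis .
    qed
    have "dist (f x1 w) (f x1 u1) < \<mu>/4" using \<rho>(2)[of w] dw by simp
    hence fw: "f x1 w < f x1 u1 + \<mu>/4" unfolding dist_real_def abs_less_iff by linarith
    have ev1: "eventually (\<lambda>x. \<forall>i. g x w $ i < 0) (at x1)"
    proof (rule eventually_all_finite)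
      fix i
      have "((\<lambda>x. g x w $ i) \<longlongrightarrow> g x1 w $ i) (at x1)"
        using cgv[of w] by (intro tendsto_vec_nth) (simp add: continuous_on_def)
      thus "eventually (\<lambda>x. g x w $ i < 0) (at x1)" using gw by (rule order_tendstoD)
    qed
    have ev2: "eventually (\<lambda>x. f x w < f x1 u1 + \<mu>/2) (at x1)"
    proof -
      have "((\<lambda>x. f x w) \<longlongrightarrow> f x1 w) (at x1)"
        using cfv[of w] by (simp add: continuous_on_def)
      thus ?thesis using fw \<mu>(1) by (elim order_tendstoD) auto
    qed
    have ev3: "eventually (\<lambda>x. dist x x1 < min r 1) (at x1)"
      using r unfolding eventually_at by (intro exI[of _ "min r 1"]) auto
    show "eventually (\<lambda>x. dist (ustar x) (ustar x1) < \<epsilon>) (at x1)"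
      using ev1 ev2 ev3
    proof eventually_elim
      case (elim x)
      show ?case
      proof (rule ccontr)
        define u where "u = ustar x"
        assume "\<not> dist (ustar x) (ustar x1) < \<epsilon>"
        hence du: "\<epsilon> \<le> dist u u1" unfolding u_def u1_def by simp
        have uf: "\<And>i. g x u $ i \<le> 0" and um: "\<And>v. (\<forall>i. g x v $ i \<le> 0) \<Longrightarrow> f x u \<le> f x v"
          using mn unfolding u_def is_minimizer_def by auto
        have fuw: "f x u \<le> f x w" using um elim(1) by (meson less_imp_le)
        define \<phi> where "\<phi> = (\<lambda>\<theta>::real. dist ((1 - \<theta>) *\<^sub>R w + \<theta> *\<^sub>R u) u1)"
        have "\<phi> 0 \<le> \<epsilon>" "\<epsilon> \<le> \<phi> 1" using dw du unfolding \<phi>_def by auto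
        moreover have "continuous_on {0..1} \<phi>" unfolding \<phi>_def by (intro continuous_intros)
        ultimately obtain \<theta> where \<theta>: "0 \<le> \<theta>" "\<theta> \<le> 1" "\<phi> \<theta> = \<epsilon>"
          using IVT'[of \<phi> 0 \<epsilon> 1] by auto
        define v where "v = (1 - \<theta>) *\<^sub>R w + \<theta> *\<^sub>R u"
        have vS: "v \<in> S" using \<theta> unfolding S_def v_def \<phi>_def by (simp add: dist_commute)
        have gv: "g x v $ i \<le> 0" for i
        proof -
          have "g x v $ i \<le> (1 - \<theta>) * g x w $ i + \<theta> * g x u $ i"
            using convex_onD[OF cv[rule_format, of x i], of \<theta> w u] \<theta> unfolding v_def by simp
          also have "\<dots> \<le> 0"
          proof -
            have "(1 - \<theta>) * g x w $ i \<le> 0" using elim(1) \<theta> by (intro mult_nonneg_nonpos) (auto intro: less_imp_le)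
            moreover have "\<theta> * g x u $ i \<le> 0" using uf[of i] \<theta> by (intro mult_nonneg_nonpos) auto
            ultimately show ?thesis by simp
          qed
          finally show ?thesis .
        qed
        have "convex_on UNIV (f x)"
        proof (rule convex_onI)
          fix t :: real and a b assume "0 < t" "t < 1"
          thus "f x ((1 - t) *\<^sub>R a + t *\<^sub>R b) \<le> (1 - t) * f x a + t * f x b"
          proof (cases "a = b")
            case True
            have "(1 - t) *\<^sub>R a + t *\<^sub>R a = a" by (simp flip: scaleR_add_left)
            moreover have "(1 - t) * f x a + t * f x a = f x a" by (simp flip: distrib_right)
            ultimately show ?thesis using True by simp
          next
            case False
            then show ?thesis using sc \<open>0 < t\<close> \<open>t < 1\<close> unfolding strictly_convex_on_def
              by (meson UNIV_I less_imp_le)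
          qed
        qed simp
        hence "f x v \<le> (1 - \<theta>) * f x w + \<theta> * f x u"
          using convex_onD[of UNIV "f x" \<theta> w u] \<theta> unfolding v_def by simp
        also have "\<dots> \<le> f x w"
        proof -
          have "\<theta> * f x u \<le> \<theta> * f x w" using fuw \<theta>(1) by (rule mult_left_mono)
          thus ?thesis by (simp add: algebra_simps)
        qed
        finally have fv: "f x v \<le> f x w" .
        have "(\<Sum>i\<in>UNIV. max 0 (g x v $ i)) = 0" using gv by (intro sum.neutral) (simp add: max_absorb1)
        hence "\<Phi> (x, v) \<le> \<mu>/2" unfolding \<Phi>_def using fv elim(2) \<mu>(1) by (simp add: max_def)
        with \<Phi>big[OF elim(3) vS] show False by simp
      qed
    qed
  qed
qed


primrec eul :: "('a::real_normed_vector \<Rightarrow> 'a) \<Rightarrow> real \<Rightarrow> 'a \<Rightarrow> nat \<Rightarrow> 'a" where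
  "eul G h x0 0 = x0"
| "eul G h x0 (Suc i) = eul G h x0 i + h *\<^sub>R G (eul G h x0 i)"

lemma eul_sum: "i \<le> j \<Longrightarrow> eul G h x0 j - eul G h x0 i = (\<Sum>l\<in>{i..<j}. h *\<^sub>R G (eul G h x0 l))"
proof (induction j)
  case 0 thus ?case by simp
next
  case (Suc j)
  show ?case
  proof (cases "i = Suc j")
    case True thus ?thesis by simp
  next
    case False
    hence "i \<le> j" using Suc.prems by simp
    thus ?thesis using Suc.IH by (simp add: sum.atLeastLessThan_Suc algebra_simps)
  qed
qed

lemma eul_est:
  assumes "i \<le> j" "h \<ge> 0" "\<And>l. i \<le> l \<Longrightarrow> l < j \<Longrightarrow> norm (G (eul G h x0 l) - c) \<le> \<omega>"
  shows "norm (eul G h x0 j - eul G h x0 i - ((real j - real i) * h) *\<^sub>R c) \<le> (real j - real i) * h * \<omega>"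
proof -
  have "eul G h x0 j - eul G h x0 i - ((real j - real i) * h) *\<^sub>R c = (\<Sum>l\<in>{i..<j}. h *\<^sub>R (G (eul G h x0 l) - c))"
    using assms(1) by (simp add: eul_sum scaleR_diff_right sum_subtractf of_nat_diff scaleR_sum_left[symmetric] )
  also have "norm \<dots> \<le> (\<Sum>l\<in>{i..<j}. h * \<omega>)"
    by (rule sum_norm_le) (use assms in \<open>auto intro: mult_left_mono\<close>)
  also have "\<dots> = (real j - real i) * h * \<omega>" using assms(1) by (simp add: of_nat_diff)
  finally show ?thesis .
qed

lemma eul_est2:
  assumes "h \<ge> 0" "\<And>l. min i j \<le> l \<Longrightarrow> l \<le> max i j \<Longrightarrow> norm (G (eul G h x0 l) - c) \<le> \<omega>"
  shows "norm (eul G h x0 j - eul G h x0 i - ((real j - real i) * h) *\<^sub>R c) \<le> \<bar>real j - real i\<bar> * h * \<omega>"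
proof (cases "i \<le> j")
  case True
  thus ?thesis using eul_est[OF True assms(1), of G x0 c \<omega>] assms(2) by simp
next
  case False
  hence ji: "j \<le> i" by simp
  have "norm (eul G h x0 i - eul G h x0 j - ((real i - real j) * h) *\<^sub>R c) \<le> (real i - real j) * h * \<omega>"
    using eul_est[OF ji assms(1), of G x0 c \<omega>] assms(2) ji by simp
  moreover have "eul G h x0 i - eul G h x0 j - ((real i - real j) * h) *\<^sub>R c =
      - (eul G h x0 j - eul G h x0 i - ((real j - real i) * h) *\<^sub>R c)"
    by (simp add: algebra_simps)
  ultimately show ?thesis using ji by (simp only: norm_minus_cancel) simp
qed

lemma eul_ball:
  assumes "\<forall>x\<in>cball x0 R. norm (G x) \<le> M" "0 \<le> h" "0 \<le> M" "real i * h * M \<le> R"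
  shows "norm (eul G h x0 i - x0) \<le> real i * h * M"
  using assms(4)
proof (induction i)
  case 0 thus ?case by simp
next
  case (Suc i)
  have hM: "h * M \<ge> 0" using assms(2,3) by simp
  have "real (Suc i) * h * M = real i * h * M + h * M" by (simp add: algebra_simps)
  hence "real i * h * M \<le> R" using Suc.prems hM by linarith
  hence ih: "norm (eul G h x0 i - x0) \<le> real i * h * M" by (rule Suc.IH)
  hence "eul G h x0 i \<in> cball x0 R" using \<open>real i * h * M \<le> R\<close> by (simp add: dist_norm norm_minus_commute)
  hence "norm (G (eul G h x0 i)) \<le> M" using assms(1) by blast
  hence "norm (h *\<^sub>R G (eul G h x0 i)) \<le> h * M" using assms(2) by (simp add: mult_left_mono)
  hence "norm (eul G h x0 (Suc i) - x0) \<le> real i * h * M + h * M"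
    using ih norm_triangle_ineq[of "eul G h x0 i - x0" "h *\<^sub>R G (eul G h x0 i)"] by (simp add: algebra_simps)
  thus ?case by (simp add: algebra_simps)
qed

lemma floor_facts:
  assumes "h > 0" "0 \<le> s"
  shows "real (nat \<lfloor>s/h\<rfloor>) * h \<le> s" "s < real (nat \<lfloor>s/h\<rfloor>) * h + h"
proof -
  have f0: "\<lfloor>s/h\<rfloor> \<ge> 0" using assms by simp
  hence e: "real (nat \<lfloor>s/h\<rfloor>) = of_int \<lfloor>s/h\<rfloor>" by simp
  have "of_int \<lfloor>s/h\<rfloor> \<le> s/h" "s/h < of_int \<lfloor>s/h\<rfloor> + 1" by linarith+
  hence "of_int \<lfloor>s/h\<rfloor> * h \<le> s" "s < (of_int \<lfloor>s/h\<rfloor> + 1) * h"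
    using mult_right_mono[of "of_int \<lfloor>s/h\<rfloor>" "s/h" h] mult_strict_right_mono[of "s/h" "of_int \<lfloor>s/h\<rfloor> + 1" h] assms(1)
    by auto
  thus "real (nat \<lfloor>s/h\<rfloor>) * h \<le> s" "s < real (nat \<lfloor>s/h\<rfloor>) * h + h"
    unfolding e using assms(1) by (simp_all add: algebra_simps)
qed

lemma eul_two:
  fixes G :: "'a::real_normed_vector \<Rightarrow> 'a"
  assumes bnd: "\<forall>x\<in>cball x0 R. norm (G x) \<le> M" and M: "M > 0" and h: "h > 0"
    and uc: "\<forall>z\<in>cball x0 R. \<forall>z'\<in>cball x0 R. dist z z' < \<eta> \<longrightarrow> norm (G z - G z') \<le> \<epsilon>"
    and s: "0 \<le> s" "s \<le> R/M" and t: "0 \<le> t" "t \<le> R/M" and small: "(\<bar>t-s\<bar> + h) * M < \<eta>"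
  shows "norm (eul G h x0 (nat \<lfloor>t/h\<rfloor>) - eul G h x0 (nat \<lfloor>s/h\<rfloor>) - (t - s) *\<^sub>R G (eul G h x0 (nat \<lfloor>s/h\<rfloor>)))
          \<le> h*M + (\<bar>t-s\<bar>+h)*\<epsilon>"
proof -
  define a where "a = nat \<lfloor>s/h\<rfloor>"
  define b where "b = nat \<lfloor>t/h\<rfloor>"
  note fa = floor_facts[OF h s(1), folded a_def]
  note fb = floor_facts[OF h t(1), folded b_def]
  have inball: "eul G h x0 l \<in> cball x0 R" if "l \<le> max a b" for l
  proof -
    have "real l * h \<le> real (max a b) * h" using that h by (intro mult_right_mono) auto
    also have "\<dots> \<le> R / M" using fa fb s t by (auto simp: max_def)
    finally have "real l * h * M \<le> R" using M by (simp add: field_simps)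
    moreover have "norm (eul G h x0 l - x0) \<le> real l * h * M"
      using eul_ball[OF bnd _ _ calculation] h M by simp
    ultimately show ?thesis by (simp add: dist_norm norm_minus_commute)
  qed
  have Gb: "norm (G (eul G h x0 l)) \<le> M" if "l \<le> max a b" for l
    using bnd inball[OF that] by blast
  have bah: "\<bar>real b - real a\<bar> * h < \<bar>t-s\<bar> + h"
    using fa fb by (auto simp: abs_if algebra_simps)
  define c where "c = G (eul G h x0 a)"
  have close: "norm (G (eul G h x0 l) - c) \<le> \<epsilon>" if "min a b \<le> l" "l \<le> max a b" for l
  proof -
    have "norm (eul G h x0 l - eul G h x0 a - ((real l - real a) * h) *\<^sub>R 0) \<le> \<bar>real l - real a\<bar> * h * M"
      by (rule eul_est2) (use h that in \<open>auto intro!: Gb\<close>)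
    hence "norm (eul G h x0 l - eul G h x0 a) \<le> \<bar>real l - real a\<bar> * h * M" by simp
    also have "\<dots> \<le> \<bar>real b - real a\<bar> * h * M"
      using that h M by (intro mult_right_mono) (auto simp: abs_if)
    also have "\<dots> < (\<bar>t-s\<bar> + h) * M" using bah M by (intro mult_strict_right_mono) auto
    also have "\<dots> < \<eta>" by (rule small)
    finally have "dist (eul G h x0 l) (eul G h x0 a) < \<eta>" by (simp add: dist_norm)
    thus ?thesis unfolding c_def using uc inball that by (meson max.cobounded1 order.trans)
  qed
  have D: "norm (eul G h x0 b - eul G h x0 a - ((real b - real a) * h) *\<^sub>R c) \<le> \<bar>real b - real a\<bar> * h * \<epsilon>"
    by (rule eul_est2) (use h close in auto)
  have cM: "norm c \<le> M" unfolding c_def by (rule Gb) simp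
  have e1: "\<bar>(real b - real a) * h - (t - s)\<bar> \<le> h" using fa fb by (auto simp: algebra_simps abs_if)
  define A where "A = eul G h x0 b - eul G h x0 a - ((real b - real a) * h) *\<^sub>R c"
  define B where "B = ((real b - real a) * h - (t - s)) *\<^sub>R c"
  have "eul G h x0 b - eul G h x0 a - (t - s) *\<^sub>R c = A + B"
    unfolding A_def B_def by (simp add: algebra_simps)
  hence "norm (eul G h x0 b - eul G h x0 a - (t - s) *\<^sub>R c) \<le> norm A + norm B"
    using norm_triangle_ineq by metis
  also have "\<dots> \<le> \<bar>real b - real a\<bar> * h * \<epsilon> + \<bar>(real b - real a) * h - (t - s)\<bar> * norm c"
    using D unfolding A_def B_def by simp
  also have "\<dots> \<le> (\<bar>t-s\<bar>+h) * \<epsilon> + h * M"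
  proof (rule add_mono)
    show "\<bar>real b - real a\<bar> * h * \<epsilon> \<le> (\<bar>t-s\<bar>+h) * \<epsilon>"
    proof (cases "\<epsilon> \<ge> 0")
      case True thus ?thesis using bah by (intro mult_right_mono) auto
    next
      case False
      hence False using close[of a] by (smt (verit) norm_ge_zero min.cobounded1 max.cobounded1)
      thus ?thesis ..
    qed
  next
    show "\<bar>(real b - real a) * h - (t - s)\<bar> * norm c \<le> h * M"
      using e1 cM h by (intro mult_mono) auto
  qed
  finally show ?thesis unfolding a_def b_def c_def by (simp add: algebra_simps)
qed

lemma cluster_fun:
  fixes xs :: "nat \<Rightarrow> real \<Rightarrow> real^'n"
  assumes "\<And>k t. xs k t \<in> cball x0 R"
  shows "\<exists>p. (\<forall>t. p t \<in> cball x0 R) \<and>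
     (\<forall>s t \<gamma> N. \<gamma> > 0 \<longrightarrow> (\<exists>k\<ge>N. dist (xs k s) (p s) < \<gamma> \<and> dist (xs k t) (p t) < \<gamma>))"
proof -
  define K where "K = PiE (UNIV::real set) (\<lambda>_. cball x0 R)"
  have "compactin (product_topology (\<lambda>i. euclidean) UNIV) K"
    unfolding K_def by (simp add: compactin_PiE)
  hence cK: "compact K" by (simp add: euclidean_product_topology)
  define F where "F = filtermap xs sequentially"
  have "F \<noteq> bot" unfolding F_def by (simp add: filtermap_bot_iff)
  moreover have "eventually (\<lambda>f. f \<in> K) F" unfolding F_def K_def
    using assms by (auto simp: eventually_filtermap PiE_iff)
  ultimately obtain p where pK: "p \<in> K" and pc: "inf (nhds p) F \<noteq> bot"
    using cK unfolding compact_filter by blast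
  show ?thesis
  proof (intro exI[of _ p] conjI allI impI)
    show "p t \<in> cball x0 R" for t using pK unfolding K_def by auto
    fix s t \<gamma> N assume g: "(\<gamma>::real) > 0"
    define U where "U = {f::real\<Rightarrow>real^'n. \<forall>i\<in>{s,t}. f (id i) \<in> ball (p i) \<gamma>}"
    have "open U" unfolding U_def by (rule product_topology_basis') auto
    moreover have "p \<in> U" using g by (auto simp: U_def)
    ultimately have e1: "eventually (\<lambda>f. f \<in> U) (nhds p)" by (rule eventually_nhds_in_open)
    have e2: "eventually (\<lambda>f. f \<in> xs ` {N..}) F" unfolding F_def eventually_filtermap
      using eventually_ge_at_top[of N] by (rule eventually_mono) auto
    have "eventually (\<lambda>f. f \<in> U \<and> f \<in> xs ` {N..}) (inf (nhds p) F)"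
      using e1 e2 by (simp add: eventually_inf) blast
    from eventually_happens'[OF pc this] obtain f where "f \<in> U" "f \<in> xs ` {N..}" by blast
    then show "\<exists>k\<ge>N. dist (xs k s) (p s) < \<gamma> \<and> dist (xs k t) (p t) < \<gamma>"
      unfolding U_def by (auto simp: dist_commute)
  qed
qed


lemma norm4: "norm (a + b + c + d) \<le> norm a + norm b + norm c + norm (d::'a::real_normed_vector)"
proof -
  have "norm (a + b + c + d) \<le> norm (a + b + c) + norm d" by (rule norm_triangle_ineq)
  moreover have "norm (a + b + c) \<le> norm (a + b) + norm c" by (rule norm_triangle_ineq)
  moreover have "norm (a + b) \<le> norm a + norm b" by (rule norm_triangle_ineq)
  ultimately show ?thesis by linarith
qed

lemma le_eps_lemma:
  fixes A B K c :: real
  assumes "c > 0" "K \<ge> 0" "\<And>\<gamma>. 0 < \<gamma> \<Longrightarrow> \<gamma> < c \<Longrightarrow> A \<le> B + \<gamma> * K"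
  shows "A \<le> B"
proof (rule field_le_epsilon)
  fix e :: real assume e: "e > 0"
  define \<gamma> where "\<gamma> = min (c/2) (e/(K+1))"
  have g: "0 < \<gamma>" "\<gamma> < c" unfolding \<gamma>_def using assms e by auto
  have "\<gamma> * K \<le> e/(K+1) * K" unfolding \<gamma>_def using assms(2) by (intro mult_right_mono) auto
  also have "\<dots> \<le> e" using e assms(2) by (simp add: field_simps)
  finally show "A \<le> B + e" using assms(3)[OF g] by linarith
qed

lemma peano_fwd:
  fixes G :: "real^'n \<Rightarrow> real^'n"
  assumes cont: "continuous_on (cball x0 R) G" and M: "M > 0" and R: "R > 0"
    and bnd: "\<forall>x\<in>cball x0 R. norm (G x) \<le> M"
  shows "\<exists>p. p 0 = x0 \<and> (\<forall>t. p t \<in> cball x0 R) \<and>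
     (\<forall>s\<in>{0..R/M}. \<forall>\<epsilon>>0. \<exists>d>0. \<forall>t\<in>{0..R/M}. \<bar>t-s\<bar> < d \<longrightarrow>
         norm (p t - p s - (t-s) *\<^sub>R G (p s)) \<le> \<epsilon> * \<bar>t-s\<bar>)"
proof -
  define \<delta> where "\<delta> = R/M"
  have \<delta>: "\<delta> > 0" unfolding \<delta>_def using R M by simp
  define hk where "hk = (\<lambda>k::nat. 1 / (real k + 1))"
  have hk: "hk k > 0" for k unfolding hk_def by simp
  define xs where "xs = (\<lambda>k t. eul G (hk k) x0 (nat \<lfloor>max 0 (min t \<delta>) / hk k\<rfloor>))"
  have xs_in: "xs k t \<in> cball x0 R" for k t
  proof -
    define \<tau> where "\<tau> = max 0 (min t \<delta>)"
    have \<tau>: "0 \<le> \<tau>" "\<tau> \<le> \<delta>" unfolding \<tau>_def using \<delta> by auto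
    define i where "i = nat \<lfloor>\<tau> / hk k\<rfloor>"
    have "real i * hk k \<le> \<tau>" unfolding i_def by (rule floor_facts(1)[OF hk \<tau>(1)])
    hence "real i * hk k * M \<le> \<tau> * M" using M by (simp add: mult_right_mono)
    also have "\<tau> * M \<le> R" using \<tau> M unfolding \<delta>_def by (simp add: field_simps)
    finally have "real i * hk k * M \<le> R" .
    hence "norm (eul G (hk k) x0 i - x0) \<le> real i * hk k * M"
      using eul_ball[OF bnd] hk[of k] M by simp
    hence "norm (eul G (hk k) x0 i - x0) \<le> R" using \<open>real i * hk k * M \<le> R\<close> by linarith
    thus ?thesis unfolding xs_def i_def \<tau>_def by (simp add: dist_norm norm_minus_commute)
  qed
  obtain p where p_in: "\<forall>t. p t \<in> cball x0 R" and
    pc: "\<And>s t \<gamma> N. \<gamma> > 0 \<Longrightarrow> \<exists>k\<ge>N. dist (xs k s) (p s) < \<gamma> \<and> dist (xs k t) (p t) < \<gamma>"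
    using cluster_fun[of xs x0 R, OF xs_in] by blast
  have xs0: "xs k 0 = x0" for k unfolding xs_def using \<delta> by simp
  have p0: "p 0 = x0"
  proof -
    have d: "dist x0 (p 0) < \<gamma>" if "\<gamma> > 0" for \<gamma> using pc[OF that, of 0 0 0] xs0 by auto
    show ?thesis
    proof (rule ccontr)
      assume "p 0 \<noteq> x0"
      hence "dist x0 (p 0) > 0" by simp
      from d[OF this] show False by simp
    qed
  qed
  have hkN: "\<exists>N. \<forall>k\<ge>N. hk k < \<gamma>" if "\<gamma> > 0" for \<gamma>
  proof -
    obtain N :: nat where N: "1/\<gamma> < real N" using reals_Archimedean2 by blast
    have "hk k < \<gamma>" if "k \<ge> N" for k
    proof -
      have "1/\<gamma> < real k + 1" using N that by linarith
      thus ?thesis unfolding hk_def using \<open>\<gamma> > 0\<close> by (simp add: field_simps)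
    qed
    thus ?thesis by blast
  qed
  have "uniformly_continuous_on (cball x0 R) G"
    using cont by (rule compact_uniformly_continuous) simp
  note uc = this[unfolded uniformly_continuous_on_def]
  show ?thesis
  proof (intro exI[of _ p] conjI ballI allI impI p0)
    show "p t \<in> cball x0 R" for t using p_in by blast
    fix s \<epsilon> :: real assume s: "s \<in> {0..R/M}" and \<epsilon>: "\<epsilon> > 0"
    define \<epsilon>' where "\<epsilon>' = \<epsilon>/4"
    have \<epsilon>': "\<epsilon>' > 0" unfolding \<epsilon>'_def using \<epsilon> by simp
    obtain \<eta> where \<eta>: "\<eta> > 0" and
      \<eta>c: "\<And>z z'. z \<in> cball x0 R \<Longrightarrow> z' \<in> cball x0 R \<Longrightarrow> dist z' z < \<eta> \<Longrightarrow> dist (G z') (G z) < \<epsilon>'"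
      using uc[rule_format, OF \<epsilon>'] by blast
    have ucc: "\<forall>z\<in>cball x0 R. \<forall>z'\<in>cball x0 R. dist z z' < \<eta> \<longrightarrow> norm (G z - G z') \<le> \<epsilon>'"
    proof (intro ballI impI)
      fix z z' assume zz: "z \<in> cball x0 R" "z' \<in> cball x0 R" "dist z z' < \<eta>"
      hence "dist (G z) (G z') < \<epsilon>'" using \<eta>c[of z' z] by simp
      thus "norm (G z - G z') \<le> \<epsilon>'" by (simp add: dist_norm)
    qed
    show "\<exists>d>0. \<forall>t\<in>{0..R/M}. \<bar>t-s\<bar> < d \<longrightarrow> norm (p t - p s - (t-s) *\<^sub>R G (p s)) \<le> \<epsilon> * \<bar>t-s\<bar>"
    proof (intro exI[of _ "\<eta>/(2*M)"] conjI ballI impI)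
      show "\<eta>/(2*M) > 0" using \<eta> M by simp
      fix t assume t: "t \<in> {0..R/M}" and ts: "\<bar>t-s\<bar> < \<eta>/(2*M)"
      define A where "A = norm (p t - p s - (t-s) *\<^sub>R G (p s))"
      have "A \<le> 2 * \<epsilon>' * \<bar>t-s\<bar>"
      proof (rule le_eps_lemma[of "min \<eta> (\<eta>/(2*M))" "2 + M + \<epsilon>'"])
        show "min \<eta> (\<eta>/(2*M)) > 0" using \<eta> M by simp
        show "2 + M + \<epsilon>' \<ge> 0" using M \<epsilon>' by simp
        fix \<gamma> :: real assume g: "0 < \<gamma>" "\<gamma> < min \<eta> (\<eta>/(2*M))"
        obtain N where N: "\<forall>k\<ge>N. hk k < \<gamma>" using hkN[OF g(1)] by blast
        obtain k where k: "k \<ge> N" "dist (xs k s) (p s) < \<gamma>" "dist (xs k t) (p t) < \<gamma>"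
          using pc[OF g(1), of N s t] by blast
        define h where "h = hk k"
        have "hk k < \<gamma>" using N k(1) by blast
        hence h: "0 < h" "h < \<gamma>" unfolding h_def using hk[of k] by simp_all
        have "0 \<le> s" "s \<le> \<delta>" "0 \<le> t" "t \<le> \<delta>" using s t unfolding \<delta>_def by simp_all
        hence ms: "max 0 (min s \<delta>) = s" and mt: "max 0 (min t \<delta>) = t" by simp_all
        have xss: "xs k s = eul G h x0 (nat \<lfloor>s/h\<rfloor>)" and xst: "xs k t = eul G h x0 (nat \<lfloor>t/h\<rfloor>)"
          unfolding xs_def h_def ms mt by simp_all
        have small: "(\<bar>t-s\<bar> + h) * M < \<eta>"
        proof -
          have "\<bar>t-s\<bar> + h < \<eta>/(2*M) + \<eta>/(2*M)" using ts h g by linarith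
          also have "\<dots> = \<eta>/M" by (simp add: field_simps)
          finally show ?thesis using M by (simp add: field_simps)
        qed
        have E: "norm (xs k t - xs k s - (t - s) *\<^sub>R G (xs k s)) \<le> h*M + (\<bar>t-s\<bar>+h)*\<epsilon>'"
        proof -
          have "0 \<le> s" "s \<le> R/M" "0 \<le> t" "t \<le> R/M" using s t by auto
          from eul_two[OF bnd M h(1) ucc this small] show ?thesis unfolding xss xst .
        qed
        have GG: "norm (G (xs k s) - G (p s)) \<le> \<epsilon>'"
        proof -
          have "dist (xs k s) (p s) < \<eta>" using k(2) g(2) by simp
          thus ?thesis using ucc xs_in[of k s] p_in by blast
        qed
        have eq4: "p t - p s - (t-s) *\<^sub>R G (p s) =
              (p t - xs k t) + (xs k s - p s) + (xs k t - xs k s - (t - s) *\<^sub>R G (xs k s))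
              + (t - s) *\<^sub>R (G (xs k s) - G (p s))"
          by (simp add: algebra_simps)
        have "A \<le> norm (p t - xs k t) + norm (xs k s - p s) + norm (xs k t - xs k s - (t - s) *\<^sub>R G (xs k s))
              + norm ((t - s) *\<^sub>R (G (xs k s) - G (p s)))"
          unfolding A_def eq4 by (rule norm4)
        also have "\<dots> \<le> \<gamma> + \<gamma> + (h*M + (\<bar>t-s\<bar>+h)*\<epsilon>') + \<bar>t-s\<bar> * \<epsilon>'"
        proof (intro add_mono)
          show "norm (p t - xs k t) \<le> \<gamma>" using k(3) by (simp add: dist_norm norm_minus_commute)
          show "norm (xs k s - p s) \<le> \<gamma>" using k(2) by (simp add: dist_norm)
          show "norm ((t - s) *\<^sub>R (G (xs k s) - G (p s))) \<le> \<bar>t-s\<bar> * \<epsilon>'"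
            using mult_left_mono[OF GG abs_ge_zero[of "t-s"]] by simp
        qed (rule E)
        also have "\<dots> \<le> 2 * \<epsilon>' * \<bar>t-s\<bar> + \<gamma> * (2 + M + \<epsilon>')"
        proof -
          have "h*M \<le> \<gamma>*M" using h M by simp
          moreover have "h*\<epsilon>' \<le> \<gamma>*\<epsilon>'" using h \<epsilon>' by simp
          moreover have "\<And>X. h*M \<le> \<gamma>*M \<Longrightarrow> h*\<epsilon>' \<le> \<gamma>*\<epsilon>' \<Longrightarrow>
             \<gamma> + \<gamma> + (h*M + (X+h)*\<epsilon>') + X * \<epsilon>' \<le> 2 * \<epsilon>' * X + \<gamma> * (2 + M + \<epsilon>')"
            by (simp add: algebra_simps)
          ultimately show ?thesis by blast
        qed
        finally show "A \<le> 2 * \<epsilon>' * \<bar>t-s\<bar> + \<gamma> * (2 + M + \<epsilon>')" .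
      qed
      also have "\<dots> \<le> \<epsilon> * \<bar>t-s\<bar>" unfolding \<epsilon>'_def using \<epsilon> by (intro mult_right_mono) auto
      finally show "norm (p t - p s - (t-s) *\<^sub>R G (p s)) \<le> \<epsilon> * \<bar>t-s\<bar>" unfolding A_def .
    qed
  qed
qed


lemma deriv_from_est:
  fixes x :: "real \<Rightarrow> 'a::real_normed_vector"
  assumes "\<And>\<epsilon>. \<epsilon> > 0 \<Longrightarrow> \<exists>d>0. \<forall>t. \<bar>t-s\<bar> < d \<longrightarrow> norm (x t - x s - (t-s) *\<^sub>R v) \<le> \<epsilon> * \<bar>t-s\<bar>"
  shows "(x has_vector_derivative v) (at s)"
  unfolding has_vector_derivative_def has_derivative_at_alt
  using assms by (auto intro: bounded_linear_scaleR_left)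

lemma locally_lipschitz_isCont:
  fixes h :: "'a::metric_space \<Rightarrow> 'b::metric_space"
  assumes "locally_lipschitz h"
  shows "isCont h z"
proof -
  obtain r L where r: "r > 0" and L: "\<forall>z1\<in>ball z r. \<forall>z2\<in>ball z r. dist (h z1) (h z2) \<le> L * dist z1 z2"
    using assms unfolding locally_lipschitz_def by blast
  show ?thesis
    unfolding isCont_def tendsto_iff
  proof (intro allI impI)
    fix e :: real assume e: "e > 0"
    define d where "d = min r (e / (\<bar>L\<bar> + 1))"
    have d: "d > 0" unfolding d_def using r e by (simp add: add_pos_nonneg)
    show "eventually (\<lambda>y. dist (h y) (h z) < e) (at z)"
      unfolding eventually_at
    proof (intro exI[of _ d] conjI ballI impI d)
      fix y assume "y \<in> UNIV" and y: "y \<noteq> z \<and> dist y z < d"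
      have "y \<in> ball z r" "z \<in> ball z r" using y r unfolding d_def by (auto simp: dist_commute)
      hence "dist (h y) (h z) \<le> L * dist y z" using L by blast
      also have "\<dots> \<le> \<bar>L\<bar> * dist y z" by (simp add: mult_right_mono)
      also have "\<dots> \<le> \<bar>L\<bar> * (e / (\<bar>L\<bar> + 1))"
        using y unfolding d_def by (intro mult_left_mono) auto
      also have "\<dots> < e" using e by (simp add: field_simps)
      finally show "dist (h y) (h z) < e" .
    qed
  qed
qed

theorem proposition4p1:
  fixes f :: "real^'n \<Rightarrow> real^'m \<Rightarrow> real"
    and g :: "real^'n \<Rightarrow> real^'m \<Rightarrow> real^'p"
    and F :: "real^'n \<Rightarrow> real^'m \<Rightarrow> real^'n"
    and ustar :: "real^'n \<Rightarrow> real^'m"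
    and x0 :: "real^'n"
  assumes "C0_2 f" and "C0_2 g"
    and "\<forall>x. strictly_convex_on UNIV (f x)"
    and "\<forall>x i. convex_on UNIV (\<lambda>u. g x u $ i)"
    and "\<forall>x. \<exists>u. is_minimizer f g x u"
    and "\<forall>x. is_minimizer f g x (ustar x)"
    and "\<exists>uh. \<forall>i. g x0 uh $ i < 0"
    and "locally_lipschitz (\<lambda>z. F (fst z) (snd z))"
  shows "\<exists>\<delta>0>0. \<exists>x :: real \<Rightarrow> real^'n. x 0 = x0 \<and>
           (\<forall>t\<in>{-\<delta>0<..<\<delta>0}. (x has_vector_derivative F (x t) (ustar (x t))) (at t))"
proof -
  have cf: "continuous_on UNIV (\<lambda>z. f (fst z) (snd z))" using assms(1) unfolding C0_2_def by blast
  have cg: "continuous_on UNIV (\<lambda>z. g (fst z) (snd z))" using assms(2) unfolding C0_2_def by blast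
  obtain uh where uh: "\<forall>i. g x0 uh $ i < 0" using assms(7) by blast
  have cgv: "continuous_on UNIV (\<lambda>x. g x uh)"
    by (rule continuous_on_compose2[OF cg, of UNIV "\<lambda>x. (x, uh)", simplified]) (auto intro!: continuous_intros)
  have "eventually (\<lambda>x. \<forall>i. g x uh $ i < 0) (at x0)"
  proof (rule eventually_all_finite)
    fix i
    have "((\<lambda>x. g x uh $ i) \<longlongrightarrow> g x0 uh $ i) (at x0)"
      using cgv by (intro tendsto_vec_nth) (simp add: continuous_on_def)
    thus "eventually (\<lambda>x. g x uh $ i < 0) (at x0)" using uh by (intro order_tendstoD) auto
  qed
  then obtain d where d: "d > 0" "\<And>x. x \<noteq> x0 \<Longrightarrow> dist x x0 < d \<Longrightarrow> \<forall>i. g x uh $ i < 0"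
    unfolding eventually_at by blast
  define R where "R = d/2"
  have R: "R > 0" unfolding R_def using d by simp
  have slR: "\<forall>i. g x uh $ i < 0" if "x \<in> cball x0 R" for x
  proof (cases "x = x0")
    case True thus ?thesis using uh by simp
  next
    case False
    have "dist x x0 < d" using that d unfolding R_def by (simp add: dist_commute)
    thus ?thesis using d(2) False by blast
  qed
  define G where "G = (\<lambda>x. F x (ustar x))"
  have cG: "isCont G x" if "x \<in> cball x0 R" for x
  proof -
    have "isCont ustar x"
      by (rule ustar_cont[OF cf cg assms(3) assms(4) assms(6) slR[OF that]])
    hence "isCont (\<lambda>x. (x, ustar x)) x" by (intro continuous_intros) auto
    moreover have "isCont (\<lambda>z. F (fst z) (snd z)) (x, ustar x)"
      by (rule locally_lipschitz_isCont[OF assms(8)])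
    ultimately show ?thesis unfolding G_def using isCont_o2 by fastforce
  qed
  hence cGo: "continuous_on (cball x0 R) G" by (intro continuous_at_imp_continuous_on) blast
  have "bounded (G ` cball x0 R)" by (intro compact_imp_bounded compact_continuous_image cGo) simp
  then obtain M where M: "M > 0" "\<forall>y\<in>G ` cball x0 R. norm y \<le> M" unfolding bounded_pos by blast
  have bnd: "\<forall>x\<in>cball x0 R. norm (G x) \<le> M" using M by blast
  have bnd': "\<forall>x\<in>cball x0 R. norm ((\<lambda>x. - G x) x) \<le> M" using bnd by simp
  have cGo': "continuous_on (cball x0 R) (\<lambda>x. - G x)" using cGo by (intro continuous_intros)
  obtain p where p0: "p 0 = x0" and
    pe: "\<forall>s\<in>{0..R/M}. \<forall>\<epsilon>>0. \<exists>d>0. \<forall>t\<in>{0..R/M}. \<bar>t-s\<bar> < d \<longrightarrow>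
         norm (p t - p s - (t-s) *\<^sub>R G (p s)) \<le> \<epsilon> * \<bar>t-s\<bar>"
    using peano_fwd[OF cGo M(1) R bnd] by blast
  obtain q where q0: "q 0 = x0" and
    qe: "\<forall>s\<in>{0..R/M}. \<forall>\<epsilon>>0. \<exists>d>0. \<forall>t\<in>{0..R/M}. \<bar>t-s\<bar> < d \<longrightarrow>
         norm (q t - q s - (t-s) *\<^sub>R (- G (q s))) \<le> \<epsilon> * \<bar>t-s\<bar>"
    using peano_fwd[OF cGo' M(1) R bnd'] by blast
  define \<delta> where "\<delta> = R/M"
  have \<delta>: "\<delta> > 0" unfolding \<delta>_def using R M by simp
  define x where "x = (\<lambda>t. if t \<ge> 0 then p t else q (-t))"
  have x0': "x 0 = x0" unfolding x_def using p0 by simp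
  have der: "(x has_vector_derivative G (x s)) (at s)" if s: "s \<in> {-\<delta><..<\<delta>}" for s
  proof (rule deriv_from_est)
    fix \<epsilon> :: real assume \<epsilon>: "\<epsilon> > 0"
    consider "s > 0" | "s < 0" | "s = 0" by linarith
    then show "\<exists>d>0. \<forall>t. \<bar>t-s\<bar> < d \<longrightarrow> norm (x t - x s - (t-s) *\<^sub>R G (x s)) \<le> \<epsilon> * \<bar>t-s\<bar>"
    proof cases
      case 1
      have "s \<in> {0..R/M}" using 1 s unfolding \<delta>_def by auto
      then obtain d1 where d1: "d1 > 0" "\<forall>t\<in>{0..R/M}. \<bar>t-s\<bar> < d1 \<longrightarrow>
         norm (p t - p s - (t-s) *\<^sub>R G (p s)) \<le> \<epsilon> * \<bar>t-s\<bar>" using pe \<epsilon> by blast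
      show ?thesis
      proof (intro exI[of _ "min d1 (min s (\<delta> - s))"] conjI allI impI)
        show "min d1 (min s (\<delta> - s)) > 0" using d1 1 s by auto
        fix t assume t: "\<bar>t-s\<bar> < min d1 (min s (\<delta> - s))"
        hence "t \<in> {0..R/M}" "t > 0" unfolding \<delta>_def by auto
        thus "norm (x t - x s - (t-s) *\<^sub>R G (x s)) \<le> \<epsilon> * \<bar>t-s\<bar>"
          using d1(2) t 1 unfolding x_def by auto
      qed
    next
      case 2
      have "-s \<in> {0..R/M}" using 2 s unfolding \<delta>_def by auto
      then obtain d1 where d1: "d1 > 0" "\<forall>t\<in>{0..R/M}. \<bar>t-(-s)\<bar> < d1 \<longrightarrow>
         norm (q t - q (-s) - (t-(-s)) *\<^sub>R (- G (q (-s)))) \<le> \<epsilon> * \<bar>t-(-s)\<bar>" using qe \<epsilon> by blast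
      show ?thesis
      proof (intro exI[of _ "min d1 (min (-s) (\<delta> + s))"] conjI allI impI)
        show "min d1 (min (-s) (\<delta> + s)) > 0" using d1 2 s by auto
        fix t assume t: "\<bar>t-s\<bar> < min d1 (min (-s) (\<delta> + s))"
        hence tt: "-t \<in> {0..R/M}" "t < 0" unfolding \<delta>_def by auto
        have "\<bar>-t-(-s)\<bar> < d1" using t by auto
        hence "norm (q (-t) - q (-s) - (-t-(-s)) *\<^sub>R (- G (q (-s)))) \<le> \<epsilon> * \<bar>-t-(-s)\<bar>"
          using d1(2) tt(1) by blast
        moreover have "q (-t) - q (-s) - (-t-(-s)) *\<^sub>R (- G (q (-s))) = x t - x s - (t-s) *\<^sub>R G (x s)"
          unfolding x_def using tt 2 by (simp add: algebra_simps)
        moreover have "\<bar>-t-(-s)\<bar> = \<bar>t-s\<bar>" by simp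
        ultimately show "norm (x t - x s - (t-s) *\<^sub>R G (x s)) \<le> \<epsilon> * \<bar>t-s\<bar>" by simp
      qed
    next
      case 3
      have z: "(0::real) \<in> {0..R/M}" using \<delta> unfolding \<delta>_def by auto
      obtain d1 where d1: "d1 > 0" "\<forall>t\<in>{0..R/M}. \<bar>t-0\<bar> < d1 \<longrightarrow>
         norm (p t - p 0 - (t-0) *\<^sub>R G (p 0)) \<le> \<epsilon> * \<bar>t-0\<bar>" using pe \<epsilon> z by blast
      obtain d2 where d2: "d2 > 0" "\<forall>t\<in>{0..R/M}. \<bar>t-0\<bar> < d2 \<longrightarrow>
         norm (q t - q 0 - (t-0) *\<^sub>R (- G (q 0))) \<le> \<epsilon> * \<bar>t-0\<bar>" using qe \<epsilon> z by blast
      show ?thesis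
      proof (intro exI[of _ "min d1 (min d2 \<delta>)"] conjI allI impI)
        show "min d1 (min d2 \<delta>) > 0" using d1 d2 \<delta> by auto
        fix t assume t: "\<bar>t-s\<bar> < min d1 (min d2 \<delta>)"
        show "norm (x t - x s - (t-s) *\<^sub>R G (x s)) \<le> \<epsilon> * \<bar>t-s\<bar>"
        proof (cases "t \<ge> 0")
          case True
          hence "t \<in> {0..R/M}" "\<bar>t-0\<bar> < d1" using t 3 unfolding \<delta>_def by auto
          hence "norm (p t - p 0 - (t-0) *\<^sub>R G (p 0)) \<le> \<epsilon> * \<bar>t-0\<bar>" using d1(2) by blast
          thus ?thesis unfolding x_def using True 3 by simp
        next
          case False
          hence "-t \<in> {0..R/M}" "\<bar>-t-0\<bar> < d2" using t 3 unfolding \<delta>_def by auto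
          hence "norm (q (-t) - q 0 - (-t-0) *\<^sub>R (- G (q 0))) \<le> \<epsilon> * \<bar>-t-0\<bar>" using d2(2) by blast
          moreover have "q (-t) - q 0 - (-t-0) *\<^sub>R (- G (q 0)) = x t - x s - (t-s) *\<^sub>R G (x s)"
            unfolding x_def using False 3 q0 p0 by (simp add: algebra_simps)
          ultimately show ?thesis using 3 by simp
        qed
      qed
    qed
  qed
  show ?thesis
    using \<delta> x0' der unfolding G_def by blast
qed

end
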